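(* Let $\ell$ be the $x$-axis. Let $P$ be a set of $n$ points with nonnegative $y$-coordinates and pairwise distinct $x$-coordinates, sorted by $x$-coordinate as $p_1,\dots,p_n$. Let $S$ be a finite set of closed disks all of the same radius, with centers having nonpositive $y$-coordinates, each disk $s$ having weight $w(s)>0$, such that no point of $P$ lies on the boundary of any disk of $S$ and every point of $P$ lies in at least one disk of $S$. For a point $p$ let $S_p\subseteq S$ be the set of disks containing $p$. Define numbers $\delta_1,\dots,\delta_n$ by the following procedure: initially $\mathrm{cost}(s)=w(s)$ for all $s\in S$; then for $i=1,2,\dots,n$ in order, set $\delta_i=\min_{s\in S_{p_i}}\mathrm{cost}(s)$, and afterwards set $\mathrm{cost}(s)=w(s)+\delta_i$ for every disk $s\in S\setminus S_{p_i}$. Then for every $i\in\{1,\dots,n\}$, $\delta_i$ equals the minimum total weight of a subset of $S$ whose union covers $\{p_1,\dots,p_i\}$. In particular $\delta_n$ equals the minimum total weight of a subset of $S$ whose union covers $P$.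
   Context: Disks are closed; the value of $\mathrm{cost}(s)$ used when computing $\delta_i$ is its value at the start of iteration $i$ (i.e., after the updates of iterations $1,\dots,i-1$). *)

theory Defs
  imports Complex_Main
begin

type_synonym point = "real \<times> real"

text \<open>A disk is given by its center; all disks share the common radius r.
  Closed disk membership and boundary.\<close>
definition in_disk :: "real \<Rightarrow> point \<Rightarrow> point \<Rightarrow> bool" where
  "in_disk r c q \<longleftrightarrow> (fst q - fst c)^2 + (snd q - snd c)^2 \<le> r^2"

definition on_boundary :: "real \<Rightarrow> point \<Rightarrow> point \<Rightarrow> bool" where
  "on_boundary r c q \<longleftrightarrow> (fst q - fst c)^2 + (snd q - snd c)^2 = r^2"

definition disks_containing :: "real \<Rightarrow> point set \<Rightarrow> point \<Rightarrow> point set" where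
  "disks_containing r S q = {s \<in> S. in_disk r s q}"

fun cost_after :: "real \<Rightarrow> point set \<Rightarrow> (point \<Rightarrow> real) \<Rightarrow> (nat \<Rightarrow> point) \<Rightarrow> nat \<Rightarrow> point \<Rightarrow> real" where
  "cost_after r S w p 0 = w"
| "cost_after r S w p (Suc i) =
     (let d = Min (cost_after r S w p i ` disks_containing r S (p (Suc i)))
      in (\<lambda>s. if s \<in> disks_containing r S (p (Suc i)) then cost_after r S w p i s
              else w s + d))"

definition delta :: "real \<Rightarrow> point set \<Rightarrow> (point \<Rightarrow> real) \<Rightarrow> (nat \<Rightarrow> point) \<Rightarrow> nat \<Rightarrow> real" where
  "delta r S w p i = Min (cost_after r S w p (i - 1) ` disks_containing r S (p i))"

definition min_cover_weight :: "real \<Rightarrow> point set \<Rightarrow> (point \<Rightarrow> real) \<Rightarrow> point set \<Rightarrow> real" where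
  "min_cover_weight r S w Q =
     Min {sum w C | C. C \<subseteq> S \<and> (\<forall>q\<in>Q. \<exists>c\<in>C. in_disk r c q)}"

end

theory Submission
  imports Defs
begin

lemma geo0:
  fixes x1 y1 x2 y2 x3 y3 u v u' v' R :: real
  assumes o12: "x1 < x2" and o23: "x2 < x3" and y1: "y1 \<ge> 0" and y2: "y2 \<ge> 0" and y3: "y3 \<ge> 0"
    and v: "v \<le> 0" and v': "v' \<le> 0"
    and sa: "(x1-u)^2+(y1-v)^2 \<le> R" and sc: "(x3-u)^2+(y3-v)^2 \<le> R"
    and sb: "(x2-u)^2+(y2-v)^2 > R"
    and tb: "(x2-u')^2+(y2-v')^2 \<le> R" and ta: "(x1-u')^2+(y1-v')^2 > R"
    and tc: "(x3-u')^2+(y3-v')^2 > R"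
  shows False
proof (cases "v' > v")
  case True
  have h1: "(y1-v')^2 < (y1-v)^2" using True y1 v' by (intro power_strict_mono) auto
  have h3: "(y3-v')^2 < (y3-v)^2" using True y3 v' by (intro power_strict_mono) auto
  have ga: "(x1-u')^2 > (x1-u)^2" using sa ta h1 by linarith
  have gc: "(x3-u')^2 > (x3-u)^2" using sc tc h3 by linarith
  have fb: "(x2-u')^2 - (x2-u)^2 + ((y2-v')^2 - (y2-v)^2) < 0" using sb tb by linarith
  have fa: "(x1-u')^2 - (x1-u)^2 + ((y1-v')^2 - (y1-v)^2) > 0" using sa ta by linarith
  have fc: "(x3-u')^2 - (x3-u)^2 + ((y3-v')^2 - (y3-v)^2) > 0" using sc tc by linarith
  consider "u < u'" | "u > u'" | "u = u'" by linarith
  then show False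
  proof cases
    case 1
    have "(u'-u)*(u'+u-2*x3) > 0" using gc by (simp add: power2_eq_square algebra_simps)
    hence "u'+u-2*x3 > 0" using 1 by (simp add: zero_less_mult_iff)
    hence "0 \<le> u'-x3" "u'-x3 < u'-x2" using o23 1 by auto
    hence "(u'-x3)^2 < (u'-x2)^2" by (intro power_strict_mono) auto
    hence "(x3-u')^2 < (x2-u')^2" by (simp add: power2_commute)
    hence "(y3-v')^2 > (y2-v')^2" using tb tc by linarith
    hence "y3 - v' > y2 - v'" using power_less_imp_less_base[of "y2-v'" 2 "y3-v'"] y3 v' by simp
    hence "y3 > y2" by simp
    have "(x3-u')^2 - (x3-u)^2 - ((x2-u')^2 - (x2-u)^2) = -2*(u'-u)*(x3-x2)"
      by (simp add: power2_eq_square algebra_simps)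
    moreover have "(u'-u)*(x3-x2) > 0" using 1 o23 by simp
    moreover have "(y3-v')^2 - (y3-v)^2 - ((y2-v')^2 - (y2-v)^2) = -2*(v'-v)*(y3-y2)"
      by (simp add: power2_eq_square algebra_simps)
    moreover have "(v'-v)*(y3-y2) > 0" using True \<open>y3 > y2\<close> by simp
    ultimately show False using fb fc by linarith
  next
    case 2
    have "(u-u')*(2*x1-u'-u) > 0" using ga by (simp add: power2_eq_square algebra_simps)
    hence "2*x1-u'-u > 0" using 2 by (simp add: zero_less_mult_iff)
    hence "0 \<le> x1-u'" "x1-u' < x2-u'" using o12 2 by auto
    hence "(x1-u')^2 < (x2-u')^2" by (intro power_strict_mono) auto
    hence "(y1-v')^2 > (y2-v')^2" using tb ta by linarith
    hence "y1 - v' > y2 - v'" using power_less_imp_less_base[of "y2-v'" 2 "y1-v'"] y1 v' by simp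
    hence "y1 > y2" by simp
    have "(x1-u')^2 - (x1-u)^2 - ((x2-u')^2 - (x2-u)^2) = -2*(u'-u)*(x1-x2)"
      by (simp add: power2_eq_square algebra_simps)
    moreover have "(u'-u)*(x1-x2) > 0" using 2 o12 by (simp add: mult_neg_neg)
    moreover have "(y1-v')^2 - (y1-v)^2 - ((y2-v')^2 - (y2-v)^2) = -2*(v'-v)*(y1-y2)"
      by (simp add: power2_eq_square algebra_simps)
    moreover have "(v'-v)*(y1-y2) > 0" using True \<open>y1 > y2\<close> by simp
    ultimately show False using fb fa by linarith
  next
    case 3 thus False using ga by simp
  qed
next
  case False
  define \<alpha> where "\<alpha> = x3 - x2"
  define \<beta> where "\<beta> = x2 - x1"
  have al: "\<alpha> > 0" "\<beta> > 0" using o12 o23 by (auto simp: \<alpha>_def \<beta>_def)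
  define H where "H = (\<alpha>+\<beta>)*y2 - \<alpha>*y1 - \<beta>*y3"
  show False
  proof (cases "H > 0")
    case True
    define f where "f = (\<lambda>x y. (x-u')^2 - (x-u)^2 + ((y-v')^2 - (y-v)^2))"
    have fb: "f x2 y2 < 0" using sb tb by (simp add: f_def)
    have fa: "f x1 y1 > 0" using sa ta by (simp add: f_def)
    have fc: "f x3 y3 > 0" using sc tc by (simp add: f_def)
    have id: "(\<alpha>+\<beta>)*f x2 y2 = \<alpha>*f x1 y1 + \<beta>*f x3 y3 + 2*(v-v')*H"
      by (simp add: f_def \<alpha>_def \<beta>_def H_def power2_eq_square algebra_simps)
    have "2*(v-v')*H \<ge> 0" using False True by simp
    moreover have "\<alpha>*f x1 y1 > 0" "\<beta>*f x3 y3 > 0" using al fa fc by auto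
    moreover have "(\<alpha>+\<beta>)*f x2 y2 < 0" using al fb by (simp add: mult_pos_neg)
    ultimately show False using id by linarith
  next
    case H: False
    define A1 where "A1 = x1 - u" define A3 where "A3 = x3 - u"
    define B1 where "B1 = y1 - v" define B3 where "B3 = y3 - v"
    have ex: "(\<alpha>+\<beta>)*(x2-u) = \<alpha>*A1 + \<beta>*A3"
      by (simp add: A1_def A3_def \<alpha>_def \<beta>_def algebra_simps)
    have ey0: "0 \<le> (\<alpha>+\<beta>)*(y2-v)" using al y2 v by simp
    have ey: "(\<alpha>+\<beta>)*(y2-v) \<le> \<alpha>*B1 + \<beta>*B3"
      using H by (simp add: B1_def B3_def H_def algebra_simps)
    have "((\<alpha>+\<beta>)*(y2-v))^2 \<le> (\<alpha>*B1 + \<beta>*B3)^2"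
      using ey ey0 by (rule power_mono)
    hence "(\<alpha>+\<beta>)^2*((x2-u)^2+(y2-v)^2) \<le> (\<alpha>*A1 + \<beta>*A3)^2 + (\<alpha>*B1 + \<beta>*B3)^2"
      using ex by (simp add: power_mult_distrib[symmetric] algebra_simps)
    also have "\<dots> = (\<alpha>+\<beta>)*(\<alpha>*(A1^2+B1^2) + \<beta>*(A3^2+B3^2)) - \<alpha>*\<beta>*((A1-A3)^2+(B1-B3)^2)"
      by (simp add: power2_eq_square algebra_simps)
    also have "\<dots> \<le> (\<alpha>+\<beta>)*(\<alpha>*(A1^2+B1^2) + \<beta>*(A3^2+B3^2))"
      using al by simp
    also have "\<dots> \<le> (\<alpha>+\<beta>)*(\<alpha>*R + \<beta>*R)"
      using al sa sc by (intro mult_left_mono add_mono) (auto simp: A1_def A3_def B1_def B3_def)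
    also have "\<dots> = (\<alpha>+\<beta>)^2 * R" by (simp add: power2_eq_square algebra_simps)
    finally have "(x2-u)^2+(y2-v)^2 \<le> R" using al by simp
    thus False using sb by simp
  qed
qed


lemma geo:
  assumes "fst a < fst b" "fst b < fst c" "snd a \<ge> 0" "snd b \<ge> 0" "snd c \<ge> 0"
    "snd s \<le> 0" "snd t \<le> 0" "in_disk r s a" "in_disk r s c" "\<not> in_disk r s b"
    "in_disk r t b" "\<not> in_disk r t a"
  shows "in_disk r t c"
proof (rule ccontr)
  assume nc: "\<not> in_disk r t c"
  show False
    apply (rule geo0[of "fst a" "fst b" "fst c" "snd a" "snd b" "snd c" "snd s" "snd t" "fst s" "r^2" "fst t"])
    using assms nc by (simp_all only: in_disk_def not_le)
qed

lemma inv1: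
  "\<forall>s\<in>S. \<exists>j\<le>i. (\<forall>k. j<k \<and> k\<le>i \<longrightarrow> in_disk r s (p k)) \<and> (j = 0 \<or> \<not> in_disk r s (p j))
     \<and> cost_after r S w p i s = w s + (if j=0 then 0 else delta r S w p j)"
proof (induction i)
  case 0
  then show ?case by auto
next
  case (Suc i)
  show ?case
  proof
    fix s assume sS: "s \<in> S"
    from Suc.IH sS obtain j where j: "j \<le> i" "\<forall>k. j<k \<and> k\<le>i \<longrightarrow> in_disk r s (p k)"
      "j = 0 \<or> \<not> in_disk r s (p j)"
      "cost_after r S w p i s = w s + (if j=0 then 0 else delta r S w p j)" by blast
    show "\<exists>j\<le>Suc i. (\<forall>k. j<k \<and> k\<le>Suc i \<longrightarrow> in_disk r s (p k)) \<and> (j = 0 \<or> \<not> in_disk r s (p j))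
     \<and> cost_after r S w p (Suc i) s = w s + (if j=0 then 0 else delta r S w p j)"
    proof (cases "in_disk r s (p (Suc i))")
      case True
      hence "cost_after r S w p (Suc i) s = cost_after r S w p i s"
        using sS by (simp add: Let_def disks_containing_def)
      moreover have "\<forall>k. j<k \<and> k\<le>Suc i \<longrightarrow> in_disk r s (p k)"
        using j(2) True le_Suc_eq by blast
      ultimately show ?thesis using j by (intro exI[of _ j]) auto
    next
      case False
      hence "cost_after r S w p (Suc i) s = w s + delta r S w p (Suc i)"
        using sS by (simp add: Let_def disks_containing_def delta_def)
      then show ?thesis using False by (intro exI[of _ "Suc i"]) auto
    qed
  qed
qed

theorem mainTheorem2:
  fixes r :: real and S :: "point set" and w :: "point \<Rightarrow> real"
    and p :: "nat \<Rightarrow> point" and n :: nat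
  assumes r_pos: "r > 0"
    and P_above: "\<forall>i\<in>{1..n}. snd (p i) \<ge> 0"
    and P_sorted: "\<forall>i\<in>{1..n}. \<forall>j\<in>{1..n}. i < j \<longrightarrow> fst (p i) < fst (p j)"
    and S_fin: "finite S"
    and S_below: "\<forall>s\<in>S. snd s \<le> 0"
    and w_pos: "\<forall>s\<in>S. w s > 0"
    and no_bdry: "\<forall>i\<in>{1..n}. \<forall>s\<in>S. \<not> on_boundary r s (p i)"
    and covered: "\<forall>i\<in>{1..n}. \<exists>s\<in>S. in_disk r s (p i)"
  shows "(\<forall>i\<in>{1..n}. delta r S w p i = min_cover_weight r S w (p ` {1..i}))
         \<and> (n \<ge> 1 \<longrightarrow> delta r S w p n = min_cover_weight r S w (p ` {1..n}))"
proof -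
  define D where "D j = (if j=0 then 0 else delta r S w p j)" for j
  define cov where "cov C i \<longleftrightarrow> C \<subseteq> S \<and> (\<forall>k\<in>{1..i}. \<exists>c\<in>C. in_disk r c (p k))" for C i
  have sum_nonneg: "sum w C \<ge> 0" if "C \<subseteq> S" for C
    using that w_pos by (intro sum_nonneg) (auto intro: less_imp_le)
  have I1: "\<forall>s\<in>S. \<exists>j\<le>i. (\<forall>k. j<k \<and> k\<le>i \<longrightarrow> in_disk r s (p k)) \<and> (j = 0 \<or> \<not> in_disk r s (p j))
     \<and> cost_after r S w p i s = w s + D j" for i
    unfolding D_def by (rule inv1)
  have Sq_ne: "disks_containing r S (p i) \<noteq> {}" "finite (disks_containing r S (p i))"
    if iin: "i \<in> {1..n}" for i
  proof -
    obtain s where "s \<in> S" "in_disk r s (p i)" using bspec[OF covered iin] by (elim bexE)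
    thus "disks_containing r S (p i) \<noteq> {}" unfolding disks_containing_def by blast
    show "finite (disks_containing r S (p i))"
      by (rule finite_subset[OF _ S_fin]) (auto simp: disks_containing_def)
  qed
  have A: "i \<le> n \<Longrightarrow> \<exists>C. cov C i \<and> sum w C \<le> D i" for i
  proof (induction i rule: less_induct)
    case (less i)
    show ?case
    proof (cases "i = 0")
      case True thus ?thesis by (intro exI[of _ "{}"]) (auto simp: cov_def D_def)
    next
      case False
      hence iin: "i \<in> {1..n}" using less.prems by auto
      have "Min (cost_after r S w p (i-1) ` disks_containing r S (p i))
          \<in> cost_after r S w p (i-1) ` disks_containing r S (p i)"
        by (rule Min_in) (use Sq_ne[OF iin] in auto)
      then obtain s where s: "s \<in> disks_containing r S (p i)"
        "cost_after r S w p (i-1) s = delta r S w p i"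
        unfolding delta_def by (metis (no_types, lifting) imageE)
      hence sS: "s \<in> S" and si: "in_disk r s (p i)" by (auto simp: disks_containing_def)
      from I1[of "i-1"] sS obtain j where j: "j \<le> i-1" "\<forall>k. j<k \<and> k\<le>i-1 \<longrightarrow> in_disk r s (p k)"
        "cost_after r S w p (i-1) s = w s + D j" by blast
      have "j < i" using j(1) False by linarith
      hence "\<exists>C. cov C j \<and> sum w C \<le> D j" using less.IH[of j] less.prems by auto
      then obtain Cj where Cj: "cov Cj j" "sum w Cj \<le> D j" by blast
      have finCj: "finite Cj" using Cj S_fin by (auto simp: cov_def intro: finite_subset)
      have "sum w (insert s Cj) \<le> w s + sum w Cj"
      proof (cases "s \<in> Cj")
        case True thus ?thesis using w_pos sS by (simp add: insert_absorb less_imp_le)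
      next
        case False thus ?thesis using finCj by simp
      qed
      moreover have "cov (insert s Cj) i"
        unfolding cov_def
      proof (intro conjI ballI)
        show "insert s Cj \<subseteq> S" using Cj sS by (auto simp: cov_def)
        fix k assume "k \<in> {1..i}"
        then consider "k \<le> j" | "j < k \<and> k \<le> i-1" | "k = i" by fastforce
        then show "\<exists>c\<in>insert s Cj. in_disk r c (p k)"
          by cases (use Cj j si \<open>k \<in> {1..i}\<close> in \<open>auto simp: cov_def\<close>)
      qed
      moreover have "D i = delta r S w p i" using False by (simp add: D_def)
      ultimately show ?thesis using Cj j s by (intro exI[of _ "insert s Cj"]) auto
    qed
  qed
  have B: "i \<le> n \<Longrightarrow> cov C i \<Longrightarrow> D i \<le> sum w C" for i C
  proof (induction i arbitrary: C rule: less_induct)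
    case (less i)
    show ?case
    proof (cases "i = 0")
      case True thus ?thesis using sum_nonneg less.prems by (auto simp: cov_def D_def)
    next
      case False
      hence iin: "i \<in> {1..n}" using less.prems by auto
      have CS: "C \<subseteq> S" using less.prems by (auto simp: cov_def)
      have finC: "finite C" using CS S_fin by (auto intro: finite_subset)
      from I1[of "i-1"] obtain J where J: "\<forall>s\<in>S. J s \<le> i-1 \<and> (\<forall>k. J s<k \<and> k\<le>i-1 \<longrightarrow> in_disk r s (p k))
         \<and> (J s = 0 \<or> \<not> in_disk r s (p (J s))) \<and> cost_after r S w p (i-1) s = w s + D (J s)"
        by metis
      have covC: "\<forall>k\<in>{1..i}. \<exists>c\<in>C. in_disk r c (p k)" using less.prems(2) unfolding cov_def by blast
      have "i \<in> {1..i}" using iin by simp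
      obtain s0 where "s0 \<in> C" "in_disk r s0 (p i)" using bspec[OF covC \<open>i \<in> {1..i}\<close>] by (elim bexE)
      then obtain s where s: "s \<in> C" "in_disk r s (p i)"
        and smin: "\<forall>t. t \<in> C \<and> in_disk r t (p i) \<longrightarrow> J s \<le> J t"
        using ex_has_least_nat[of "\<lambda>s. s \<in> C \<and> in_disk r s (p i)" s0 J] by blast
      have sS: "s \<in> S" using s CS by auto
      define j where "j = J s"
      have j: "j \<le> i-1" "\<forall>k. j<k \<and> k\<le>i-1 \<longrightarrow> in_disk r s (p k)"
         "j = 0 \<or> \<not> in_disk r s (p j)" "cost_after r S w p (i-1) s = w s + D j"
        using J sS unfolding j_def by auto
      have "delta r S w p i \<le> cost_after r S w p (i-1) s"
        unfolding delta_def using Sq_ne(2)[OF iin] sS s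
        by (intro Min_le) (auto simp: disks_containing_def)
      hence di: "D i \<le> w s + D j" using j False by (simp add: D_def)
      have sumC: "sum w C = w s + sum w (C - {s})"
        using finC s(1) by (simp add: sum.remove)
      show ?thesis
      proof (cases "j = 0")
        case True
        have "sum w (C - {s}) \<ge> 0" using sum_nonneg[of "C-{s}"] CS by auto
        thus ?thesis using di sumC True by (simp add: D_def)
      next
        case jnz: False
        have smem: "in_disk r s (p m)" if "j < m" "m \<le> i" for m
          using j(2) s(2) that by (cases "m = i") auto
        have "cov (C - {s}) j"
          unfolding cov_def
        proof (intro conjI ballI)
          show "C - {s} \<subseteq> S" using CS by auto
          fix k assume kj: "k \<in> {1..j}"
          show "\<exists>c\<in>C - {s}. in_disk r c (p k)"
          proof (rule ccontr)
            assume nc: "\<not> (\<exists>c\<in>C - {s}. in_disk r c (p k))"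
            have "\<exists>c\<in>C. in_disk r c (p k)" using less.prems kj j(1) by (auto simp: cov_def)
            hence sk: "in_disk r s (p k)" using nc by auto
            have sj: "\<not> in_disk r s (p j)" using j(3) jnz by simp
            hence kltj: "k < j" using sk kj by (cases "k = j") auto
            have "j \<in> {1..i}" using j(1) jnz by auto
            then obtain t where t: "t \<in> C" "in_disk r t (p j)" using bspec[OF covC] by blast
            have ts: "t \<noteq> s" using t sj by auto
            have tk: "\<not> in_disk r t (p k)" using nc t ts by auto
            have tS: "t \<in> S" using t CS by auto
            have tm: "in_disk r t (p m)" if "j < m" "m \<le> i" for m
            proof (rule geo[of "p k" "p j" "p m" s t r])
              have "k \<in> {1..n}" "j \<in> {1..n}" "m \<in> {1..n}" using kj that j(1) less.prems by auto
              thus "fst (p k) < fst (p j)" "fst (p j) < fst (p m)"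
                "snd (p k) \<ge> 0" "snd (p j) \<ge> 0" "snd (p m) \<ge> 0"
                using P_sorted P_above kltj that by auto
              show "snd s \<le> 0" "snd t \<le> 0" using S_below sS tS by auto
              show "in_disk r s (p k)" "in_disk r s (p m)" "\<not> in_disk r s (p j)"
                "in_disk r t (p j)" "\<not> in_disk r t (p k)" using sk smem[OF that] sj t tk by auto
            qed
            have "in_disk r t (p i)" using tm[of i] j(1) False by auto
            hence Jt: "j \<le> J t" using smin t(1) unfolding j_def by blast
            have "J t \<le> i-1" "J t = 0 \<or> \<not> in_disk r t (p (J t))" using J tS by auto
            moreover have "in_disk r t (p (J t))" using Jt tm[of "J t"] t(2) \<open>J t \<le> i-1\<close>
              by (cases "J t = j") auto
            ultimately show False using Jt jnz by auto
          qed
        qed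
        hence "D j \<le> sum w (C - {s})" using less.IH[of j] j(1) False less.prems by auto
        thus ?thesis using di sumC by linarith
      qed
    qed
  qed
  have main: "delta r S w p i = min_cover_weight r S w (p ` {1..i})" if iin: "i \<in> {1..n}" for i
  proof -
    define M where "M = {sum w C | C. C \<subseteq> S \<and> (\<forall>q\<in>p ` {1..i}. \<exists>c\<in>C. in_disk r c q)}"
    have Meq: "M = {sum w C | C. cov C i}" unfolding M_def cov_def by auto
    have finM: "finite M" unfolding Meq
      by (rule finite_subset[of _ "sum w ` Pow S"]) (auto simp: cov_def S_fin)
    from A[of i] iin obtain C where C: "cov C i" "sum w C \<le> D i" by auto
    have CM: "sum w C \<in> M" using C unfolding Meq by auto
    have "Min M \<le> D i" using Min_le[OF finM CM] C by linarith
    moreover have "D i \<le> Min M"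
    proof -
      have "Min M \<in> M" using Min_in[OF finM] CM by auto
      then obtain C' where "cov C' i" "Min M = sum w C'" unfolding Meq by auto
      thus ?thesis using B[of i C'] iin by auto
    qed
    ultimately show ?thesis using iin by (simp add: min_cover_weight_def M_def D_def)
  qed
  show ?thesis
  proof (intro conjI ballI impI)
    fix i assume "i \<in> {1..n}" thus "delta r S w p i = min_cover_weight r S w (p ` {1..i})" by (rule main)
  next
    assume "n \<ge> 1" thus "delta r S w p n = min_cover_weight r S w (p ` {1..n})" by (intro main) simp
  qed
qed

end
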